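(* Let $G$ be a connected simple graph with $n$ vertices and $n+1$ edges belonging to the class $\mathcal{A}(p,q,l)$ for some $p,q,l$. Then $\operatorname{avm}(G)\ge \operatorname{avm}(\theta_n^1(3,3))$, with equality if and only if $G\cong \theta_n^1(3,3)$.
   Context: For a finite simple graph $G$, $\operatorname{avm}(G)$ is the average of $|M|$ over all maximal matchings $M$ of $G$ (a matching is maximal if it is not properly contained in another matching). A connected graph with $n$ vertices and $n+1$ edges contains two induced cycles $C_p$ and $C_q$ (of lengths $p$ and $q$); it belongs to $\mathcal{A}(p,q,l)$ if these cycles have a common path of length $l\ge 1$ (so the union of the cycles is a theta graph). $\theta_n^1(3,3)$ is the graph obtained from two triangles sharing an edge $uv$ (vertices $u,v,x,y$, edges $uv,ux,uy,vx,vy$) by attaching $n-4$ pendant edges (new leaves) to $u$. *)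

theory Defs
  imports Complex_Main
begin

definition simple_graph :: "'a set \<Rightarrow> 'a set set \<Rightarrow> bool" where
  "simple_graph V E \<longleftrightarrow> finite V \<and> (\<forall>e\<in>E. card e = 2 \<and> e \<subseteq> V)"

definition graph_connected :: "'a set \<Rightarrow> 'a set set \<Rightarrow> bool" where
  "graph_connected V E \<longleftrightarrow>
     (\<forall>u\<in>V. \<forall>v\<in>V. (u, v) \<in> {(x, y). {x, y} \<in> E}\<^sup>*)"

definition matching :: "'a set set \<Rightarrow> 'a set set \<Rightarrow> bool" where
  "matching E M \<longleftrightarrow> M \<subseteq> E \<and> (\<forall>e1\<in>M. \<forall>e2\<in>M. e1 \<noteq> e2 \<longrightarrow> e1 \<inter> e2 = {})"

definition maximal_matching :: "'a set set \<Rightarrow> 'a set set \<Rightarrow> bool" where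
  "maximal_matching E M \<longleftrightarrow> matching E M \<and> (\<forall>M'. matching E M' \<and> M \<subseteq> M' \<longrightarrow> M' = M)"

definition avm :: "'a set set \<Rightarrow> real" where
  "avm E = (\<Sum>M\<in>{M. maximal_matching E M}. real (card M)) / real (card {M. maximal_matching E M})"

definition induced_edges :: "'a set set \<Rightarrow> 'a set \<Rightarrow> 'a set set" where
  "induced_edges E S = {e\<in>E. e \<subseteq> S}"

definition is_cycle :: "'a set \<Rightarrow> 'a set set \<Rightarrow> nat \<Rightarrow> bool" where
  "is_cycle S F k \<longleftrightarrow> k \<ge> 3 \<and> (\<exists>vs. distinct vs \<and> length vs = k \<and> set vs = S \<and>
      F = {{vs ! i, vs ! ((i + 1) mod k)} | i. i < k})"

definition is_path :: "'a set \<Rightarrow> 'a set set \<Rightarrow> nat \<Rightarrow> bool" where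
  "is_path S F l \<longleftrightarrow> (\<exists>vs. distinct vs \<and> length vs = l + 1 \<and> set vs = S \<and>
      F = {{vs ! i, vs ! (i + 1)} | i. i < l})"

definition induced_cycle :: "'a set \<Rightarrow> 'a set set \<Rightarrow> 'a set \<Rightarrow> nat \<Rightarrow> bool" where
  "induced_cycle V E S k \<longleftrightarrow> S \<subseteq> V \<and> is_cycle S (induced_edges E S) k"

text \<open>Class A(p,q,l): two induced cycles C_p, C_q whose common part is a path of
  length l \<ge> 1 (the intersection of the edge sets of two induced cycles is the set of
  edges induced on the intersection of their vertex sets).\<close>
definition class_A :: "'a set \<Rightarrow> 'a set set \<Rightarrow> nat \<Rightarrow> nat \<Rightarrow> nat \<Rightarrow> bool" where
  "class_A V E p q l \<longleftrightarrow> l \<ge> 1 \<and> (\<exists>S1 S2. induced_cycle V E S1 p \<and> induced_cycle V E S2 q \<and>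
      is_path (S1 \<inter> S2) (induced_edges E (S1 \<inter> S2)) l)"

text \<open>theta_n^1(3,3) on vertices {0..<n}: u=0, v=1, x=2, y=3, leaves 4..n-1 attached to u.\<close>
definition theta_V :: "nat \<Rightarrow> nat set" where
  "theta_V n = {0..<n}"

definition theta_E :: "nat \<Rightarrow> nat set set" where
  "theta_E n = {{0,1},{0,2},{0,3},{1,2},{1,3}} \<union> {{0, i} | i. 4 \<le> i \<and> i < n}"

definition graph_iso :: "'a set \<Rightarrow> 'a set set \<Rightarrow> 'b set \<Rightarrow> 'b set set \<Rightarrow> bool" where
  "graph_iso V E V' E' \<longleftrightarrow> (\<exists>f. bij_betw f V V' \<and> (\<forall>e. e \<subseteq> V \<longrightarrow> (e \<in> E \<longleftrightarrow> f ` e \<in> E')))"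

end

theory Submission
  imports Defs
begin

lemma matching_eq:
  "matching E M \<Longrightarrow> e1 \<in> M \<Longrightarrow> e2 \<in> M \<Longrightarrow> e1 \<inter> e2 \<noteq> {} \<Longrightarrow> e1 = e2"
  unfolding matching_def by blast

lemma has_a_edge:
  assumes ab: "a \<noteq> b" and fin: "finite B"
    and nA: "a \<notin> A" "b \<notin> A" and nB: "a \<notin> B" "b \<notin> B"
    and cA: "card A \<ge> 2"
    and E: "E = insert {a,b} ((\<lambda>w. {a,w})`A \<union> (\<lambda>w. {b,w})`B)"
    and M: "maximal_matching E M" and nab: "{a,b} \<notin> M"
  shows "\<exists>x\<in>A. {a,x} \<in> M"
proof (rule ccontr)
  assume na: "\<not> (\<exists>x\<in>A. {a,x} \<in> M)"
  have mM: "matching E M" and mx: "\<And>M'. matching E M' \<Longrightarrow> M \<subseteq> M' \<Longrightarrow> M' = M"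
    using M unfolding maximal_matching_def by auto
  have ME: "M \<subseteq> E" using mM unfolding matching_def by auto
  define Y where "Y = {y. {b,y} \<in> M}"
  have Mform: "\<And>e. e \<in> M \<Longrightarrow> \<exists>y\<in>B. e = {b,y}"
  proof -
    fix e assume e: "e \<in> M"
    then have "e \<in> E" using ME by auto
    then show "\<exists>y\<in>B. e = {b,y}" using E na nab e by auto
  qed
  have Y1: "\<And>y1 y2. y1 \<in> Y \<Longrightarrow> y2 \<in> Y \<Longrightarrow> y1 = y2"
  proof -
    fix y1 y2 assume "y1 \<in> Y" "y2 \<in> Y"
    then have "{b,y1} \<in> M" "{b,y2} \<in> M" unfolding Y_def by auto
    then have "{b,y1} = {b,y2}" using matching_eq[OF mM] by blast
    then show "y1 = y2" by (metis doubleton_eq_iff)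
  qed
  have "\<exists>x\<in>A. x \<notin> Y"
  proof (rule ccontr)
    assume "\<not> (\<exists>x\<in>A. x \<notin> Y)"
    then have AY: "A \<subseteq> Y" by auto
    obtain x1 x2 where "x1 \<in> A" "x2 \<in> A" "x1 \<noteq> x2"
      using cA by (metis One_nat_def card.infinite card_le_Suc0_iff_eq not_less_eq_eq numeral_2_eq_2 zero_le_one le_zero_eq one_le_numeral)
    then show False using AY Y1 by blast
  qed
  then obtain x where x: "x \<in> A" "x \<notin> Y" by auto
  have "{a,x} \<notin> M" using na x by auto
  moreover have "{a,x} \<in> E" using E x by auto
  moreover have "matching E (insert {a,x} M)"
    unfolding matching_def
  proof (intro conjI ballI impI)
    show "insert {a, x} M \<subseteq> E" using ME \<open>{a,x} \<in> E\<close> by auto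
  next
    fix e1 e2 assume "e1 \<in> insert {a,x} M" "e2 \<in> insert {a,x} M" "e1 \<noteq> e2"
    moreover have "\<And>e. e \<in> M \<Longrightarrow> {a,x} \<inter> e = {}"
    proof -
      fix e assume "e \<in> M"
      then obtain y where y: "y \<in> B" "e = {b,y}" using Mform by blast
      then have "y \<in> Y" using \<open>e \<in> M\<close> unfolding Y_def by auto
      then show "{a,x} \<inter> e = {}" using y x ab nA nB by auto
    qed
    ultimately show "e1 \<inter> e2 = {}" using mM unfolding matching_def by blast
  qed
  ultimately show False using mx[of "insert {a,x} M"] by auto
qed

lemma maxmatch_dom:
  assumes ab: "a \<noteq> b" and fin: "finite A" "finite B"
    and nA: "a \<notin> A" "b \<notin> A" and nB: "a \<notin> B" "b \<notin> B"
    and cA: "card A \<ge> 2" and cB: "card B \<ge> 2"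
    and E: "E = insert {a,b} ((\<lambda>w. {a,w})`A \<union> (\<lambda>w. {b,w})`B)"
  shows "{M. maximal_matching E M} =
    insert {{a,b}} ((\<lambda>(x,y). {{a,x},{b,y}}) ` {(x,y). x\<in>A \<and> y\<in>B \<and> x\<noteq>y})"
proof (intro equalityI subsetI)
  fix M assume "M \<in> {M. maximal_matching E M}"
  then have M: "maximal_matching E M" by auto
  have mM: "matching E M" using M unfolding maximal_matching_def by auto
  have ME: "M \<subseteq> E" using mM unfolding matching_def by auto
  show "M \<in> insert {{a,b}} ((\<lambda>(x,y). {{a,x},{b,y}}) ` {(x,y). x\<in>A \<and> y\<in>B \<and> x\<noteq>y})"
  proof (cases "{a,b} \<in> M")
    case True
    have "M = {{a,b}}"
    proof (intro equalityI subsetI)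
      fix e assume "e \<in> M"
      moreover have "e \<inter> {a,b} \<noteq> {}" using \<open>e \<in> M\<close> ME E by auto
      ultimately show "e \<in> {{a,b}}" using matching_eq[OF mM _ True] by auto
    qed (use True in auto)
    then show ?thesis by auto
  next
    case False
    obtain x where x: "x \<in> A" "{a,x} \<in> M"
      using has_a_edge[OF ab fin(2) nA nB cA E M False] by auto
    have E': "E = insert {b,a} ((\<lambda>w. {b,w})`B \<union> (\<lambda>w. {a,w})`A)" using E by auto
    have F': "{b,a} \<notin> M" using False by (simp add: insert_commute)
    obtain y where y: "y \<in> B" "{b,y} \<in> M"
      using has_a_edge[OF ab[symmetric] fin(1) nB(2) nB(1) nA(2) nA(1) cB E' M F'] by auto
    have "x \<noteq> y"
    proof
      assume "x = y"
      then have "{a,x} = {b,y}" using matching_eq[OF mM x(2) y(2)] by auto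
      then show False using ab x nA by (metis doubleton_eq_iff)
    qed
    have "M = {{a,x},{b,y}}"
    proof (intro equalityI subsetI)
      fix e assume e: "e \<in> M"
      then have "e \<in> E" using ME by auto
      then have "e \<inter> {a,x} \<noteq> {} \<or> e \<inter> {b,y} \<noteq> {}" using E e False by auto
      then show "e \<in> {{a,x},{b,y}}" using matching_eq[OF mM e x(2)] matching_eq[OF mM e y(2)] by auto
    qed (use x y in auto)
    then show ?thesis using x y \<open>x \<noteq> y\<close> by auto
  qed
next
  fix M assume "M \<in> insert {{a,b}} ((\<lambda>(x,y). {{a,x},{b,y}}) ` {(x,y). x\<in>A \<and> y\<in>B \<and> x\<noteq>y})"
  then consider "M = {{a,b}}" | x y where "x \<in> A" "y \<in> B" "x \<noteq> y" "M = {{a,x},{b,y}}" by auto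
  then show "M \<in> {M. maximal_matching E M}"
  proof cases
    case 1
    have "matching E M" using 1 E unfolding matching_def by auto
    moreover have "M' = M" if "matching E M'" "M \<subseteq> M'" for M'
    proof (intro equalityI subsetI)
      fix e assume e: "e \<in> M'"
      have ab': "{a,b} \<in> M'" using that 1 by auto
      have "e \<in> E" using e that unfolding matching_def by auto
      then have "e \<inter> {a,b} \<noteq> {}" using E by auto
      then show "e \<in> M" using matching_eq[OF that(1) e ab'] 1 by auto
    qed (use that in auto)
    ultimately show ?thesis unfolding maximal_matching_def by auto
  next
    case 2
    have "matching E M" using 2 E ab nA nB unfolding matching_def by auto
    moreover have "M' = M" if "matching E M'" "M \<subseteq> M'" for M'
    proof (intro equalityI subsetI)
      fix e assume e: "e \<in> M'"
      have ax: "{a,x} \<in> M'" and "{b,y} \<in> M'" using that 2 by auto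
      have "e \<in> E" using e that unfolding matching_def by auto
      then have "e \<inter> {a,x} \<noteq> {} \<or> e \<inter> {b,y} \<noteq> {}" using E by auto
      then show "e \<in> M" using matching_eq[OF that(1) e ax] matching_eq[OF that(1) e \<open>{b,y} \<in> M'\<close>] 2 by auto
    qed (use that in auto)
    ultimately show ?thesis unfolding maximal_matching_def by auto
  qed
qed

lemma card_offdiag:
  assumes "finite A" "finite B"
  shows "card {(x,y). x\<in>A \<and> y\<in>B \<and> x\<noteq>y} + card (A \<inter> B) = card A * card B"
proof -
  define P where "P = {(x,y). x\<in>A \<and> y\<in>B \<and> x\<noteq>y}"
  define D where "D = (\<lambda>x. (x,x)) ` (A \<inter> B)"
  have eq: "A \<times> B = P \<union> D" unfolding P_def D_def by auto
  have dj: "P \<inter> D = {}" unfolding P_def D_def by auto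
  have fP: "finite P" unfolding P_def
    by (rule finite_subset[of _ "A \<times> B"]) (use assms in auto)
  have fD: "finite D" unfolding D_def using assms by auto
  have cD: "card D = card (A \<inter> B)" unfolding D_def
    by (rule card_image) (auto simp: inj_on_def)
  have "card A * card B = card (P \<union> D)" using eq by (simp add: card_cartesian_product[symmetric])
  also have "\<dots> = card P + card D" using fP fD dj by (rule card_Un_disjoint)
  finally show ?thesis unfolding P_def[symmetric] using cD by simp
qed

lemma avm_dom:
  assumes ab: "a \<noteq> b" and fin: "finite A" "finite B"
    and nA: "a \<notin> A" "b \<notin> A" and nB: "a \<notin> B" "b \<notin> B"
    and cA: "card A \<ge> 2" and cB: "card B \<ge> 2"
    and E: "E = insert {a,b} ((\<lambda>w. {a,w})`A \<union> (\<lambda>w. {b,w})`B)"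
  shows "avm E = (2 * (real (card A * card B) - real (card (A \<inter> B))) + 1)
                 / ((real (card A * card B) - real (card (A \<inter> B))) + 1)"
proof -
  define P where "P = {(x,y). x\<in>A \<and> y\<in>B \<and> x\<noteq>y}"
  define h where "h = (\<lambda>(x,y). {{a,x},{b,y}})"
  have S: "{M. maximal_matching E M} = insert {{a,b}} (h ` P)"
    using maxmatch_dom[OF assms] unfolding P_def h_def by simp
  have finP: "finite P" unfolding P_def
    by (rule finite_subset[of _ "A \<times> B"]) (use fin in auto)
  have inj: "inj_on h P"
  proof (rule inj_onI)
    fix p q assume "p \<in> P" "q \<in> P" "h p = h q"
    then obtain x y x' y' where p: "p = (x,y)" "x \<in> A" "y \<in> B" and q: "q = (x',y')" "x' \<in> A" "y' \<in> B"
      and eq: "{{a,x},{b,y}} = {{a,x'},{b,y'}}" unfolding P_def h_def by auto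
    have "{a,x} \<noteq> {b,y'}" using ab p q nA nB by (auto simp: doubleton_eq_iff)
    then have "{a,x} = {a,x'} \<and> {b,y} = {b,y'}" using eq by (auto simp: doubleton_eq_iff)
    then show "p = q" using p q nA nB by (auto simp: doubleton_eq_iff)
  qed
  have nin: "{{a,b}} \<notin> h ` P"
  proof
    assume "{{a,b}} \<in> h ` P"
    then obtain x y where "x \<in> A" "y \<in> B" "{{a,b}} = {{a,x},{b,y}}" unfolding P_def h_def by auto
    then have "{a,x} \<in> {{a,b}}" by blast
    then show False using \<open>x \<in> A\<close> nA by (auto simp: doubleton_eq_iff)
  qed
  have c2: "\<And>p. p \<in> P \<Longrightarrow> card (h p) = 2"
  proof -
    fix p assume "p \<in> P"
    then obtain x y where p: "p = (x,y)" "x \<in> A" "y \<in> B" unfolding P_def by auto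
    have "{a,x} \<noteq> {b,y}" using ab p nA nB by (auto simp: doubleton_eq_iff)
    then show "card (h p) = 2" unfolding h_def p by simp
  qed
  have cN: "card {M. maximal_matching E M} = 1 + card P"
    unfolding S using nin finP inj by (simp add: card_image)
  have sN: "(\<Sum>M\<in>{M. maximal_matching E M}. real (card M)) = 1 + 2 * real (card P)"
  proof -
    have "(\<Sum>M\<in>{M. maximal_matching E M}. real (card M)) = 1 + (\<Sum>M\<in>h ` P. real (card M))"
      unfolding S using nin finP by simp
    also have "(\<Sum>M\<in>h ` P. real (card M)) = (\<Sum>p\<in>P. real (card (h p)))"
      using sum.reindex[OF inj] by simp
    also have "\<dots> = (\<Sum>p\<in>P. 2)" using c2 by simp
    finally show ?thesis by simp
  qed
  have cP: "real (card P) = real (card A * card B) - real (card (A \<inter> B))"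
  proof -
    have "real (card P + card (A \<inter> B)) = real (card A * card B)"
      using card_offdiag[OF fin] unfolding P_def by simp
    then show ?thesis by linarith
  qed
  show ?thesis unfolding avm_def sN cN cP[symmetric] by (simp add: algebra_simps)
qed

lemma matching_transfer:
  assumes inj: "inj_on h E" and dj: "\<forall>e1\<in>E. \<forall>e2\<in>E. (h e1 \<inter> h e2 = {}) = (e1 \<inter> e2 = {})"
    and ME: "M \<subseteq> E"
  shows "matching (h ` E) (h ` M) \<longleftrightarrow> matching E M"
proof
  assume m: "matching (h ` E) (h ` M)"
  show "matching E M" unfolding matching_def
  proof (intro conjI ballI impI)
    fix e1 e2 assume "e1 \<in> M" "e2 \<in> M" "e1 \<noteq> e2"
    then have "h e1 \<noteq> h e2" using inj ME by (meson inj_on_contraD subsetD)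
    then have "h e1 \<inter> h e2 = {}" using m \<open>e1 \<in> M\<close> \<open>e2 \<in> M\<close> unfolding matching_def by auto
    moreover have "(h e1 \<inter> h e2 = {}) = (e1 \<inter> e2 = {})" using dj ME \<open>e1 \<in> M\<close> \<open>e2 \<in> M\<close> by blast
    ultimately show "e1 \<inter> e2 = {}" by simp
  qed (use ME in auto)
next
  assume m: "matching E M"
  show "matching (h ` E) (h ` M)" unfolding matching_def
  proof (intro conjI ballI impI)
    fix f1 f2 assume "f1 \<in> h ` M" "f2 \<in> h ` M" "f1 \<noteq> f2"
    then obtain e1 e2 where "e1 \<in> M" "e2 \<in> M" "f1 = h e1" "f2 = h e2" "e1 \<noteq> e2" by auto
    then have "e1 \<inter> e2 = {}" using m unfolding matching_def by auto
    moreover have "(h e1 \<inter> h e2 = {}) = (e1 \<inter> e2 = {})" using dj ME \<open>e1 \<in> M\<close> \<open>e2 \<in> M\<close> by blast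
    ultimately show "f1 \<inter> f2 = {}" using \<open>f1 = h e1\<close> \<open>f2 = h e2\<close> by simp
  qed (use ME in auto)
qed

lemma maxmatch_transfer:
  assumes inj: "inj_on h E" and dj: "\<forall>e1\<in>E. \<forall>e2\<in>E. (h e1 \<inter> h e2 = {}) = (e1 \<inter> e2 = {})"
  shows "{M. maximal_matching (h ` E) M} = (image h) ` {M. maximal_matching E M}"
proof (intro equalityI subsetI)
  fix M' assume "M' \<in> {M. maximal_matching (h ` E) M}"
  then have mx: "maximal_matching (h ` E) M'" by auto
  define M where "M = E \<inter> h -` M'"
  have ME: "M \<subseteq> E" unfolding M_def by auto
  have "M' \<subseteq> h ` E" using mx unfolding maximal_matching_def matching_def by blast
  then have M'eq: "M' = h ` M" unfolding M_def by auto
  have "maximal_matching E M" unfolding maximal_matching_def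
  proof (intro conjI allI impI)
    show mM: "matching E M" using matching_transfer[OF inj dj ME] mx M'eq unfolding maximal_matching_def by auto
    fix M1 assume a: "matching E M1 \<and> M \<subseteq> M1"
    have M1E: "M1 \<subseteq> E" using a unfolding matching_def by auto
    have "matching (h ` E) (h ` M1)" using matching_transfer[OF inj dj M1E] a by auto
    moreover have "M' \<subseteq> h ` M1" using a M'eq by auto
    ultimately have "h ` M1 = h ` M" using mx M'eq unfolding maximal_matching_def by auto
    then show "M1 = M" using inj_on_image_eq_iff[OF inj M1E ME] by auto
  qed
  then show "M' \<in> (image h) ` {M. maximal_matching E M}" using M'eq by auto
next
  fix M' assume "M' \<in> (image h) ` {M. maximal_matching E M}"
  then obtain M where mx: "maximal_matching E M" and M'eq: "M' = h ` M" by auto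
  have ME: "M \<subseteq> E" using mx unfolding maximal_matching_def matching_def by auto
  have "maximal_matching (h ` E) M'" unfolding maximal_matching_def
  proof (intro conjI allI impI)
    show "matching (h ` E) M'" using matching_transfer[OF inj dj ME] mx M'eq unfolding maximal_matching_def by auto
    fix M1' assume a: "matching (h ` E) M1' \<and> M' \<subseteq> M1'"
    define M1 where "M1 = E \<inter> h -` M1'"
    have M1E: "M1 \<subseteq> E" unfolding M1_def by auto
    have "M1' \<subseteq> h ` E" using a unfolding matching_def by blast
    then have M1'eq: "M1' = h ` M1" unfolding M1_def by auto
    have "matching E M1" using matching_transfer[OF inj dj M1E] a M1'eq by auto
    moreover have "M \<subseteq> M1" using a M'eq ME unfolding M1_def by auto
    ultimately have "M1 = M" using mx unfolding maximal_matching_def by auto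
    then show "M1' = M'" using M1'eq M'eq by auto
  qed
  then show "M' \<in> {M. maximal_matching (h ` E) M}" by auto
qed

lemma avm_transfer:
  assumes inj: "inj_on h E" and dj: "\<forall>e1\<in>E. \<forall>e2\<in>E. (h e1 \<inter> h e2 = {}) = (e1 \<inter> e2 = {})"
  shows "avm (h ` E) = avm E"
proof -
  let ?S = "{M. maximal_matching E M}"
  have SP: "?S \<subseteq> Pow E" unfolding maximal_matching_def matching_def by auto
  have injS: "inj_on (image h) ?S" using inj_on_image_Pow[OF inj] SP by (rule inj_on_subset)
  have cM: "\<And>M. M \<in> ?S \<Longrightarrow> card (h ` M) = card M"
    using inj SP by (meson PowD card_image inj_on_subset subsetD)
  have "(\<Sum>M\<in>(image h) ` ?S. real (card M)) = (\<Sum>M\<in>?S. real (card (h ` M)))"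
    using sum.reindex[OF injS] by simp
  also have "\<dots> = (\<Sum>M\<in>?S. real (card M))" using cM by simp
  finally show ?thesis unfolding avm_def maxmatch_transfer[OF inj dj] card_image[OF injS] by simp
qed

lemma avm_iso:
  assumes iso: "graph_iso V E V' E'" and EV: "\<forall>e\<in>E. e \<subseteq> V" and EV': "\<forall>e\<in>E'. e \<subseteq> V'"
  shows "avm E = avm E'"
proof -
  obtain f where bij: "bij_betw f V V'" and iff: "\<forall>e. e \<subseteq> V \<longrightarrow> (e \<in> E \<longleftrightarrow> f ` e \<in> E')"
    using iso unfolding graph_iso_def by auto
  have injf: "inj_on f V" using bij bij_betw_def by auto
  have E'eq: "E' = (image f) ` E"
  proof (intro equalityI subsetI)
    fix e' assume e': "e' \<in> E'"
    define e where "e = inv_into V f ` e'"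
    have "e' \<subseteq> f ` V" using e' EV' bij by (auto simp: bij_betw_def)
    then have fe: "f ` e = e'" unfolding e_def by (simp add: image_inv_into_cancel)
    have eV: "e \<subseteq> V" unfolding e_def using \<open>e' \<subseteq> f ` V\<close> by (auto intro: inv_into_into)
    then have "e \<in> E" using iff e' fe by auto
    then show "e' \<in> (image f) ` E" using fe by auto
  next
    fix e' assume "e' \<in> (image f) ` E"
    then obtain e where "e \<in> E" "e' = f ` e" by auto
    then show "e' \<in> E'" using iff EV by auto
  qed
  have inj: "inj_on (image f) E" using inj_on_image_Pow[OF injf] EV
    by (meson Pow_iff inj_on_subset subsetI)
  have dj: "\<forall>e1\<in>E. \<forall>e2\<in>E. (f ` e1 \<inter> f ` e2 = {}) = (e1 \<inter> e2 = {})"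
  proof (intro ballI)
    fix e1 e2 assume "e1 \<in> E" "e2 \<in> E"
    then have "f ` e1 \<inter> f ` e2 = f ` (e1 \<inter> e2)" using inj_on_image_Int[OF injf] EV by auto
    then show "(f ` e1 \<inter> f ` e2 = {}) = (e1 \<inter> e2 = {})" by simp
  qed
  show ?thesis using avm_transfer[OF inj dj] E'eq by simp
qed

lemma theta_rep:
  assumes "n \<ge> 4"
  shows "theta_E n = insert {0,1} ((\<lambda>w. {0,w}) ` {2..<n} \<union> (\<lambda>w. {1,w}) ` {2,3})"
proof -
  have s: "{2..<n} = insert 2 (insert 3 {4..<n})" using assms by auto
  have c: "{{0, i} | i. 4 \<le> i \<and> i < n} = (\<lambda>w. {0,w}) ` {4..<n}" by auto
  show ?thesis unfolding theta_E_def c s by (simp add: insert_commute)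
qed

lemma avm_theta:
  assumes "n \<ge> 4"
  shows "avm (theta_E n) = (2 * (2 * real n - 6) + 1) / ((2 * real n - 6) + 1)"
proof -
  have c: "card {2..<n} = n - 2" by simp
  have i: "{2..<n} \<inter> {2::nat,3} = {2,3}" using assms by auto
  have "avm (theta_E n) = (2 * (real (card {2..<n} * card {2::nat,3}) - real (card ({2..<n} \<inter> {2::nat,3}))) + 1)
                 / ((real (card {2..<n} * card {2::nat,3}) - real (card ({2..<n} \<inter> {2::nat,3}))) + 1)"
    by (rule avm_dom[OF _ _ _ _ _ _ _ _ _ theta_rep[OF assms]]) (use assms in auto)
  also have "\<dots> = (2 * (2 * real n - 6) + 1) / ((2 * real n - 6) + 1)"
    unfolding i c using assms by (simp add: of_nat_diff)
  finally show ?thesis .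
qed

lemma gmono:
  fixes K1 K2 :: real
  assumes "0 \<le> K1" "K1 < K2"
  shows "(2*K1+1)/(K1+1) < (2*K2+1)/(K2+1)"
  using assms by (simp add: field_simps)

lemma iso_construct:
  assumes ab: "a \<noteq> b" and fin: "finite A" and nA: "a \<notin> A" "b \<notin> A" and BA: "B \<subseteq> A"
    and cB: "card B = 2" and cA: "card A + 2 = n"
    and V: "V = insert a (insert b A)"
    and E: "E = insert {a,b} ((\<lambda>w. {a,w})`A \<union> (\<lambda>w. {b,w})`B)"
  shows "graph_iso V E (theta_V n) (theta_E n)"
proof -
  obtain x y where B: "B = {x,y}" and xy: "x \<noteq> y" using cB card_2_iff by metis
  have xA: "x \<in> A" and yA: "y \<in> A" using B BA by auto
  define L where "L = A - {x,y}"
  have finL: "finite L" unfolding L_def using fin by auto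
  have cL: "card L = n - 4" unfolding L_def using cA xA yA xy fin
    by (simp add: card_Diff_subset)
  have n4: "n \<ge> 4" using cA card_mono[OF fin BA] cB by auto
  obtain g where g: "bij_betw g L {4..<n}"
    using bij_betw_iff_card[OF finL, of "{4..<n}"] cL by auto
  define f where "f v = (if v = a then 0 else if v = b then 1 else if v = x then 2 else if v = y then (3::nat) else g v)" for v
  have fa: "f a = 0" and fb: "f b = 1" and fx: "f x = 2" and fy: "f y = 3"
    using ab xA yA nA xy unfolding f_def by auto
  have fL: "f ` L = {4..<n}"
  proof -
    have "f ` L = g ` L" unfolding L_def f_def using nA by (intro image_cong) auto
    then show ?thesis using g by (simp add: bij_betw_def)
  qed
  have Adec: "A = insert x (insert y L)" unfolding L_def using xA yA by auto
  have fA: "f ` A = {2..<n}"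
  proof -
    have "f ` A = insert 2 (insert 3 {4..<n})" unfolding Adec using fx fy fL by auto
    also have "\<dots> = {2..<n}" using n4 by auto
    finally show ?thesis .
  qed
  have fB: "f ` B = {2,3}" unfolding B using fx fy by auto
  have fV: "f ` V = {0..<n}"
  proof -
    have "f ` V = insert 0 (insert 1 {2..<n})" unfolding V using fa fb fA by auto
    also have "\<dots> = {0..<n}" using n4 by auto
    finally show ?thesis .
  qed
  have finV: "finite V" using V fin by auto
  have cV: "card V = n" using V fin nA ab cA by auto
  have injf: "inj_on f V" by (rule eq_card_imp_inj_on[OF finV]) (simp add: fV cV)
  have bij: "bij_betw f V (theta_V n)" unfolding bij_betw_def theta_V_def using injf fV by auto
  have EV: "\<forall>e\<in>E. e \<subseteq> V" using E V BA by auto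
  have imgE: "(image f) ` E = theta_E n"
  proof -
    have "(image f) ` E = insert {f a, f b} ((\<lambda>w. {f a, f w}) ` A \<union> (\<lambda>w. {f b, f w}) ` B)"
      unfolding E by (simp add: image_Un image_image)
    also have "\<dots> = insert {0,1} ((\<lambda>u. {0,u}) ` (f ` A) \<union> (\<lambda>u. {1,u}) ` (f ` B))"
      by (simp only: fa fb image_image)
    finally show ?thesis unfolding fA fB theta_rep[OF n4] .
  qed
  have "\<forall>e. e \<subseteq> V \<longrightarrow> (e \<in> E \<longleftrightarrow> f ` e \<in> theta_E n)"
  proof (intro allI impI iffI)
    fix e assume "e \<subseteq> V" "e \<in> E"
    then show "f ` e \<in> theta_E n" using imgE by auto
  next
    fix e assume eV: "e \<subseteq> V" and "f ` e \<in> theta_E n"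
    then have "f ` e \<in> (image f) ` E" using imgE by simp
    then obtain e' where "e' \<in> E" "f ` e = f ` e'" by (auto simp del: image_image)
    then have "e = e'" using inj_on_image_eq_iff[OF injf eV] EV by auto
    then show "e \<in> E" using \<open>e' \<in> E\<close> by simp
  qed
  then show ?thesis unfolding graph_iso_def using bij by auto
qed

lemma dom_case_struct:
  assumes sg: "simple_graph V E" and conn: "graph_connected V E"
    and cV: "card V = n" and cE: "card E = n + 1"
    and ab: "a \<noteq> b" and abE: "{a,b} \<in> E" and dom: "\<forall>e\<in>E. a \<in> e \<or> b \<in> e"
  defines "A \<equiv> {w. {a,w} \<in> E \<and> w \<noteq> b}" and "B \<equiv> {w. {b,w} \<in> E \<and> w \<noteq> a}"
  shows "finite A \<and> finite B \<and> a \<notin> A \<and> b \<notin> A \<and> a \<notin> B \<and> b \<notin> B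
     \<and> E = insert {a,b} ((\<lambda>w. {a,w})`A \<union> (\<lambda>w. {b,w})`B)
     \<and> V = insert a (insert b (A \<union> B))
     \<and> card A + card B = n \<and> card (A \<inter> B) = 2"
proof -
  have finV: "finite V" and Ed: "\<forall>e\<in>E. card e = 2 \<and> e \<subseteq> V" using sg unfolding simple_graph_def by auto
  have finE: "finite E" using cE card.infinite by force
  have aV: "a \<in> V" "b \<in> V" using abE Ed by auto
  have AV: "A \<subseteq> V" "B \<subseteq> V" unfolding A_def B_def using Ed by auto
  then have finA: "finite A" "finite B" using finV finite_subset by auto
  have nA: "a \<notin> A" "b \<notin> A" "a \<notin> B" "b \<notin> B" unfolding A_def B_def using Ed by force+
  have Erep: "E = insert {a,b} ((\<lambda>w. {a,w})`A \<union> (\<lambda>w. {b,w})`B)"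
  proof (intro equalityI subsetI)
    fix e assume e: "e \<in> E"
    then obtain x y where xy: "e = {x,y}" "x \<noteq> y" using Ed card_2_iff by metis
    have "a \<in> e \<or> b \<in> e" using dom e by auto
    then show "e \<in> insert {a,b} ((\<lambda>w. {a,w})`A \<union> (\<lambda>w. {b,w})`B)"
    proof
      assume "a \<in> e"
      then obtain w where w: "e = {a,w}" using xy by (metis insert_commute insertE singletonD)
      show ?thesis
      proof (cases "w = b")
        case True then show ?thesis using w by auto
      next
        case False then have "w \<in> A" unfolding A_def using w e by auto
        then show ?thesis using w by auto
      qed
    next
      assume "b \<in> e"
      then obtain w where w: "e = {b,w}" using xy by (metis insert_commute insertE singletonD)
      show ?thesis
      proof (cases "w = a")
        case True then show ?thesis using w by (auto simp: insert_commute)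
      next
        case False then have "w \<in> B" unfolding B_def using w e by auto
        then show ?thesis using w by auto
      qed
    qed
  next
    fix e assume "e \<in> insert {a,b} ((\<lambda>w. {a,w})`A \<union> (\<lambda>w. {b,w})`B)"
    then show "e \<in> E" using abE unfolding A_def B_def by auto
  qed
  have ia: "inj_on (\<lambda>w. {a,w}) A" by (rule inj_onI) (auto simp: doubleton_eq_iff)
  have ib: "inj_on (\<lambda>w. {b,w}) B" by (rule inj_onI) (auto simp: doubleton_eq_iff)
  have dj: "(\<lambda>w. {a,w})`A \<inter> (\<lambda>w. {b,w})`B = {}" using nA ab by (auto simp: doubleton_eq_iff)
  have nin: "{a,b} \<notin> (\<lambda>w. {a,w})`A \<union> (\<lambda>w. {b,w})`B" using nA ab by (auto simp: doubleton_eq_iff)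
  have "card E = 1 + card ((\<lambda>w. {a,w})`A \<union> (\<lambda>w. {b,w})`B)"
    using Erep nin finA by simp
  also have "\<dots> = 1 + card A + card B"
    using card_Un_disjoint[of "(\<lambda>w. {a,w})`A" "(\<lambda>w. {b,w})`B"] dj finA card_image[OF ia] card_image[OF ib] by simp
  finally have cAB: "card A + card B = n" using cE by simp
  have Vrep: "V = insert a (insert b (A \<union> B))"
  proof (intro equalityI subsetI)
    fix v assume v: "v \<in> V"
    show "v \<in> insert a (insert b (A \<union> B))"
    proof (cases "v = a")
      case False
      have "(v, a) \<in> {(x, y). {x, y} \<in> E}\<^sup>*" using conn v aV unfolding graph_connected_def by auto
      then obtain y where "(v, y) \<in> {(x, y). {x, y} \<in> E}"
        using False by (metis converse_rtranclE)
      then have e: "{v,y} \<in> E" by auto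
      then have "a \<in> {v,y} \<or> b \<in> {v,y}" using dom by auto
      then show ?thesis
      proof
        assume "a \<in> {v,y}"
        then have "y = a" using False by auto
        then have "{a,v} \<in> E" using e by (simp add: insert_commute)
        then show ?thesis unfolding A_def by auto
      next
        assume "b \<in> {v,y}"
        then have "v = b \<or> y = b" by auto
        then show ?thesis
        proof
          assume "y = b"
          then have "{b,v} \<in> E" using e by (simp add: insert_commute)
          then show ?thesis unfolding B_def using False by auto
        qed auto
      qed
    qed auto
  qed (use aV AV in auto)
  have "card V = 2 + card (A \<union> B)" unfolding Vrep using nA ab finA by auto
  then have "card (A \<union> B) + 2 = n" using cV by simp
  moreover have "card A + card B = card (A \<union> B) + card (A \<inter> B)" using card_Un_Int finA by auto
  ultimately have "card (A \<inter> B) = 2" using cAB by simp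
  then show ?thesis using finA nA Erep Vrep cAB by auto
qed

theorem theorem2p1:
  fixes V :: "'a set" and E :: "'a set set" and n :: nat
  assumes "simple_graph V E"
    and "graph_connected V E"
    and "card V = n"
    and "card E = n + 1"
    and "\<exists>p q l. class_A V E p q l"
  shows "avm E \<ge> avm (theta_E n)
    \<and> (avm E = avm (theta_E n) \<longleftrightarrow> graph_iso V E (theta_V n) (theta_E n))"
proof -
  have finV: "finite V" and Ed: "\<forall>e\<in>E. card e = 2 \<and> e \<subseteq> V" using assms(1) unfolding simple_graph_def by auto
  have finE: "finite E" using assms(4) card.infinite by force
  have EV: "\<forall>e\<in>E. e \<subseteq> V" using Ed by auto
  have n4: "n \<ge> 4"
  proof -
    have "E \<subseteq> {e. e \<subseteq> V \<and> card e = 2}" using Ed by auto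
    then have "card E \<le> card {e. e \<subseteq> V \<and> card e = 2}"
      by (rule card_mono[rotated]) (use finV in auto)
    also have "\<dots> = n choose 2" using n_subsets[OF finV] assms(3) by simp
    finally have le: "n + 1 \<le> n choose 2" using assms(4) by simp
    show ?thesis
    proof (rule ccontr)
      assume "\<not> n \<ge> 4"
      then have "n = 0 \<or> n = 1 \<or> n = 2 \<or> n = 3" by arith
      then show False using le by (auto simp: choose_two)
    qed
  qed
  have thV: "\<forall>e\<in>theta_E n. e \<subseteq> theta_V n" using n4 unfolding theta_E_def theta_V_def by auto
  have Th: "avm (theta_E n) = (2 * (2 * real n - 6) + 1) / ((2 * real n - 6) + 1)"
    using avm_theta[OF n4] .
  have isoeq: "graph_iso V E (theta_V n) (theta_E n) \<Longrightarrow> avm E = avm (theta_E n)"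
    using avm_iso EV thV by blast
  show ?thesis
  proof (cases "\<exists>a b. a \<noteq> b \<and> {a,b} \<in> E \<and> (\<forall>e\<in>E. a \<in> e \<or> b \<in> e)")
    case False
    define S where "S = {M. maximal_matching E M}"
    have SP: "S \<subseteq> Pow E" unfolding S_def maximal_matching_def matching_def by auto
    have finS: "finite S" using SP finE by (meson finite_Pow_iff finite_subset)
    have "S \<noteq> {}"
    proof -
      have fm: "finite {M. matching E M}"
        by (rule finite_subset[of _ "Pow E"]) (use finE in \<open>auto simp: matching_def\<close>)
      have "{} \<in> {M. matching E M}" unfolding matching_def by auto
      then obtain m where "m \<in> {M. matching E M}" "\<forall>b\<in>{M. matching E M}. m \<le> b \<longrightarrow> m = b"
        using finite_has_maximal[OF fm] by blast
      then have "maximal_matching E m" unfolding maximal_matching_def by auto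
      then show ?thesis unfolding S_def by auto
    qed
    have c2: "\<And>M. M \<in> S \<Longrightarrow> card M \<ge> 2"
    proof -
      fix M assume "M \<in> S"
      then have mx: "maximal_matching E M" unfolding S_def by auto
      have mM: "matching E M" and mxx: "\<And>M'. matching E M' \<Longrightarrow> M \<subseteq> M' \<Longrightarrow> M' = M"
        using mx unfolding maximal_matching_def by auto
      have ME: "M \<subseteq> E" using mM unfolding matching_def by auto
      have finM: "finite M" using ME finE finite_subset by auto
      have "M \<noteq> {}"
      proof
        assume M0: "M = {}"
        obtain e where "e \<in> E" using assms(4) by fastforce
        then have "matching E {e}" unfolding matching_def by auto
        then show False using mxx[of "{e}"] M0 by auto
      qed
      moreover have "card M \<noteq> 1"
      proof
        assume "card M = 1"
        then obtain e where Me: "M = {e}" using card_1_singletonE by blast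
        then have eE: "e \<in> E" using ME by auto
        then obtain a b where e: "e = {a,b}" "a \<noteq> b" using Ed card_2_iff by metis
        then obtain e' where e': "e' \<in> E" "a \<notin> e'" "b \<notin> e'" using False eE by blast
        have "matching E {e, e'}" using e e' eE unfolding matching_def by auto
        then have "{e,e'} = M" using mxx Me by auto
        then show False using Me e e' by auto
      qed
      ultimately show "card M \<ge> 2" using finM
        by (metis One_nat_def card_0_eq less_2_cases not_le)
    qed
    have "(\<Sum>M\<in>S. real (card M)) \<ge> (\<Sum>M\<in>S. 2)"
      by (rule sum_mono) (use c2 in auto)
    then have "(\<Sum>M\<in>S. real (card M)) \<ge> 2 * real (card S)" by simp
    moreover have "card S > 0" using finS \<open>S \<noteq> {}\<close> by (simp add: card_gt_0_iff)
    ultimately have ge2: "avm E \<ge> 2" unfolding avm_def S_def[symmetric]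
      by (simp add: le_divide_eq)
    have lt2: "avm (theta_E n) < 2" unfolding Th using n4 by (simp add: field_simps)
    show ?thesis using ge2 lt2 isoeq by auto
  next
    case True
    then obtain a b where ab: "a \<noteq> b" and abE: "{a,b} \<in> E" and dom: "\<forall>e\<in>E. a \<in> e \<or> b \<in> e" by blast
    define A where "A = {w. {a,w} \<in> E \<and> w \<noteq> b}"
    define B where "B = {w. {b,w} \<in> E \<and> w \<noteq> a}"
    have st: "finite A \<and> finite B \<and> a \<notin> A \<and> b \<notin> A \<and> a \<notin> B \<and> b \<notin> B
     \<and> E = insert {a,b} ((\<lambda>w. {a,w})`A \<union> (\<lambda>w. {b,w})`B)
     \<and> V = insert a (insert b (A \<union> B))
     \<and> card A + card B = n \<and> card (A \<inter> B) = 2"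
      using dom_case_struct[OF assms(1-4) ab abE dom] unfolding A_def B_def by blast
    then have finA: "finite A" "finite B" and nA: "a \<notin> A" "b \<notin> A" "a \<notin> B" "b \<notin> B"
      and Erep: "E = insert {a,b} ((\<lambda>w. {a,w})`A \<union> (\<lambda>w. {b,w})`B)"
      and Vrep: "V = insert a (insert b (A \<union> B))"
      and cAB: "card A + card B = n" and cI: "card (A \<inter> B) = 2" by auto
    have cA: "card A \<ge> 2" using card_mono[OF finA(1), of "A \<inter> B"] cI by auto
    have cB: "card B \<ge> 2" using card_mono[OF finA(2), of "A \<inter> B"] cI by auto
    have avmE: "avm E = (2 * (real (card A * card B) - 2) + 1) / ((real (card A * card B) - 2) + 1)"
      using avm_dom[OF ab finA nA cA cB Erep] cI by simp
    define K where "K = real (card A * card B) - 2"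
    define Kt where "Kt = 2 * real n - 6"
    have KK: "K - Kt = (real (card A) - 2) * (real (card B) - 2)"
      unfolding K_def Kt_def using cAB[symmetric] by (simp add: algebra_simps)
    have Kt0: "Kt \<ge> 0" unfolding Kt_def using n4 by simp
    have eqs: "avm E = (2*K+1)/(K+1)" "avm (theta_E n) = (2*Kt+1)/(Kt+1)"
      unfolding avmE Th K_def Kt_def by simp_all
    show ?thesis
    proof (cases "card A = 2 \<or> card B = 2")
      case True
      then have "K = Kt" using KK by auto
      then have eq: "avm E = avm (theta_E n)" using eqs by simp
      have iso: "graph_iso V E (theta_V n) (theta_E n)"
        using True
      proof
        assume cB2: "card B = 2"
        have "A \<inter> B = B" using card_subset_eq[OF finA(2), of "A \<inter> B"] cI cB2 by auto
        then have BA: "B \<subseteq> A" by auto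
        show ?thesis
          by (rule iso_construct[OF ab finA(1) nA(1,2) BA cB2 _ _ Erep]) (use cAB cB2 Vrep BA in auto)
      next
        assume cA2: "card A = 2"
        have "A \<inter> B = A" using card_subset_eq[OF finA(1), of "A \<inter> B"] cI cA2 by auto
        then have AB: "A \<subseteq> B" by auto
        have E': "E = insert {b,a} ((\<lambda>w. {b,w})`B \<union> (\<lambda>w. {a,w})`A)" using Erep by auto
        show ?thesis
          by (rule iso_construct[OF ab[symmetric] finA(2) nA(4,3) AB cA2 _ _ E']) (use cAB cA2 Vrep AB in auto)
      qed
      show ?thesis using eq iso by simp
    next
      case False
      then have "card A > 2" "card B > 2" using cA cB by auto
      then have "K - Kt > 0" unfolding KK by simp
      then have "avm (theta_E n) < avm E" unfolding eqs using gmono[OF Kt0] by simp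
      then show ?thesis using isoeq by auto
    qed
  qed
qed

end
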